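(* Let $T$ be a triangle with maximum angle $\theta_M<\pi$, and let $e_1,e_2$ be the two edges of $T$ adjacent to the maximum angle, with unit tangent vectors $\mathbf t_{e_1},\mathbf t_{e_2}$. Then for every segment $e\subseteq T$ with unit direction vector $\mathbf t_e$, $$\|\mathbf v_h\cdot\mathbf t_e\|_{0,e}\lesssim(\sin\theta_M)^{-1/2}\sum_{i=1,2}\|\mathbf v_h\cdot\mathbf t_{e_i}\|_{0,e_i}\qquad\forall\mathbf v_h\in[\mathcal P_0(T)]^2.$$
   Context: $[\mathcal P_0(T)]^2$ denotes constant vector fields on $T$; $\|\cdot\|_{0,e}$ is the $L^2$ norm on the segment $e$. $A\lesssim B$ means $A\le CB$ with an absolute constant $C$. *)

theory Defs
  imports "HOL-Analysis.Analysis"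
begin

definition vec_angle :: "real^2 \<Rightarrow> real^2 \<Rightarrow> real" where
  "vec_angle u w = arccos ((u \<bullet> w) / (norm u * norm w))"

definition tri_angle :: "real^2 \<Rightarrow> real^2 \<Rightarrow> real^2 \<Rightarrow> real" where
  "tri_angle a b c = vec_angle (b - a) (c - a)"

definition unit_tangent :: "real^2 \<Rightarrow> real^2 \<Rightarrow> real^2" where
  "unit_tangent x y = (1 / norm (y - x)) *\<^sub>R (y - x)"

text \<open>L2 norm on the segment [x,y] of a scalar function f, via the arclength
  parametrisation s \<mapsto> x + s (y - x), s in [0,1].\<close>
definition seg_L2 :: "(real^2 \<Rightarrow> real) \<Rightarrow> real^2 \<Rightarrow> real^2 \<Rightarrow> real" where
  "seg_L2 f x y = sqrt (dist x y * integral {0..1} (\<lambda>s. (f (x + s *\<^sub>R (y - x)))\<^sup>2))"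

end

theory Submission
  imports Defs
begin

definition det2 :: "real^2 \<Rightarrow> real^2 \<Rightarrow> real" where
  "det2 u w = u$1 * w$2 - u$2 * w$1"

lemma inner2: "(u::real^2) \<bullet> w = u$1*w$1 + u$2*w$2"
  by (simp add: inner_vec_def sum_2)

lemma normsq2: "(norm (u::real^2))\<^sup>2 = (u$1)\<^sup>2 + (u$2)\<^sup>2"
  by (simp only: power2_norm_eq_inner inner2) (simp add: power2_eq_square)

lemma lagrange2: "(det2 u w)\<^sup>2 = (norm u)\<^sup>2 * (norm w)\<^sup>2 - (u \<bullet> w)\<^sup>2"
  unfolding normsq2 inner2 det2_def by (simp add: algebra_simps power2_eq_square)

lemma det2_bound: "\<bar>det2 u w\<bar> \<le> norm u * norm w"
proof -
  have "(det2 u w)\<^sup>2 \<le> (norm u * norm w)\<^sup>2" using lagrange2[of u w] by (simp add: power_mult_distrib)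
  hence "sqrt ((det2 u w)\<^sup>2) \<le> sqrt ((norm u * norm w)\<^sup>2)" by (rule real_sqrt_le_mono)
  thus ?thesis by simp
qed

lemma seg_L2_const: "seg_L2 (\<lambda>z. c) x y = \<bar>c\<bar> * sqrt (dist x y)"
  unfolding seg_L2_def by (simp add: real_sqrt_mult mult.commute)

lemma det2_zero_collinear:
  assumes "det2 (q - p) (r - p) = 0"
  shows "collinear {p, q, r}"
proof (cases "q = p")
  case True
  then show ?thesis by (simp add: collinear_2)
next
  case False
  define u where "u = q - p"
  define w where "w = r - p"
  have u0: "u \<noteq> 0" using False u_def by simp
  hence uu: "u \<bullet> u > 0" by simp
  define c where "c = (u \<bullet> w) / (u \<bullet> u)"
  have dz: "u$1 * w$2 - u$2 * w$1 = 0" using assms by (simp add: det2_def u_def w_def)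
  have "w = c *\<^sub>R u"
  proof -
    have "w$i * (u \<bullet> u) = (u \<bullet> w) * u$i" for i
    proof -
      have "i = 1 \<or> i = 2" using exhaust_2 by blast
      thus ?thesis unfolding inner2 using dz
        by (auto simp: algebra_simps power2_eq_square)
    qed
    thus ?thesis using uu by (simp add: vec_eq_iff c_def field_simps)
  qed
  hence "r = p + c *\<^sub>R u" using w_def by (simp add: algebra_simps)
  moreover have "q = p + 1 *\<^sub>R u" "p = p + 0 *\<^sub>R u" using u_def by simp_all
  ultimately show ?thesis unfolding collinear_alt by blast
qed

lemma key_real:
  fixes L a b D al be A B E :: real
  assumes "L > 0" "a > 0" "b > 0" "D > 0" "\<bar>al\<bar> \<le> 1" "\<bar>be\<bar> \<le> 1"
    "\<bar>al\<bar> * D \<le> L * b" "\<bar>be\<bar> * D \<le> a * L"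
    "E \<le> \<bar>al\<bar> * A + \<bar>be\<bar> * B" "A \<ge> 0" "B \<ge> 0"
  shows "E / L * sqrt L \<le> sqrt (a * b / D) * (A / a * sqrt a + B / b * sqrt b)"
proof -
  have sL: "sqrt L > 0" using assms by simp
  have e1: "E / L * sqrt L = E / sqrt L"
  proof -
    have a: "L = sqrt L * sqrt L" using assms(1) by simp
    show ?thesis by (subst (1) a) (use sL in \<open>simp add: field_simps\<close>)
  qed
  have h1: "\<bar>al\<bar> / sqrt L \<le> sqrt (b / D)"
  proof -
    have "\<bar>al\<bar> * \<bar>al\<bar> \<le> \<bar>al\<bar>" by (metis abs_ge_zero assms(5,6) mult_left_le_one_le)
    hence "\<bar>al\<bar> * \<bar>al\<bar> * D \<le> \<bar>al\<bar> * D" using assms(4) by (simp add: mult_right_mono)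
    hence "al\<^sup>2 * D \<le> \<bar>al\<bar> * D" by (simp add: power2_eq_square)
    hence "al\<^sup>2 * D \<le> L * b" using assms(7) by (simp add: mult.commute)
    hence "al\<^sup>2 / L \<le> b / D" using assms(1,4) by (simp add: field_simps)
    hence "sqrt (al\<^sup>2 / L) \<le> sqrt (b / D)" by (rule real_sqrt_le_mono)
    thus ?thesis by (simp add: real_sqrt_divide)
  qed
  have h2: "\<bar>be\<bar> / sqrt L \<le> sqrt (a / D)"
  proof -
    have "\<bar>be\<bar> * \<bar>be\<bar> \<le> \<bar>be\<bar>" by (metis abs_ge_zero assms(5,6) mult_left_le_one_le)
    hence "\<bar>be\<bar> * \<bar>be\<bar> * D \<le> \<bar>be\<bar> * D" using assms(4) by (simp add: mult_right_mono)
    hence "be\<^sup>2 * D \<le> \<bar>be\<bar> * D" by (simp add: power2_eq_square)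
    hence "be\<^sup>2 * D \<le> L * a" using assms(8) by (simp add: mult.commute)
    hence "be\<^sup>2 / L \<le> a / D" using assms(1,4) by (simp add: field_simps)
    hence "sqrt (be\<^sup>2 / L) \<le> sqrt (a / D)" by (rule real_sqrt_le_mono)
    thus ?thesis by (simp add: real_sqrt_divide)
  qed
  have r1: "sqrt (a * b / D) * (A / a * sqrt a) = A * sqrt (b / D)"
  proof -
    have "sqrt (a * b / D) = sqrt a * sqrt (b / D)" by (simp add: real_sqrt_mult[symmetric])
    moreover have "sqrt a * sqrt a = a" using assms by simp
    ultimately show ?thesis using assms by (simp add: field_simps)
  qed
  have r2: "sqrt (a * b / D) * (B / b * sqrt b) = B * sqrt (a / D)"
  proof -
    have "sqrt (a * b / D) = sqrt b * sqrt (a / D)" by (simp add: real_sqrt_mult[symmetric] mult.commute)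
    moreover have "sqrt b * sqrt b = b" using assms by simp
    ultimately show ?thesis using assms by (simp add: field_simps)
  qed
  have "E / sqrt L \<le> (\<bar>al\<bar> * A + \<bar>be\<bar> * B) / sqrt L"
    using assms(9) sL by (simp add: divide_right_mono)
  also have "\<dots> = A * (\<bar>al\<bar> / sqrt L) + B * (\<bar>be\<bar> / sqrt L)" by (simp add: add_divide_distrib mult.commute)
  also have "\<dots> \<le> A * sqrt (b / D) + B * sqrt (a / D)"
    using h1 h2 assms by (intro add_mono mult_left_mono) auto
  finally show ?thesis using e1 r1 r2 by (simp add: distrib_left)
qed

lemma det2_lin1: "det2 (al *\<^sub>R u + be *\<^sub>R w) w = al * det2 u w"
  by (simp add: det2_def algebra_simps)
lemma det2_lin2: "det2 u (al *\<^sub>R u + be *\<^sub>R w) = be * det2 u w"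
  by (simp add: det2_def algebra_simps)

lemma hull_coords:
  assumes "x \<in> convex hull {p, q, r}"
  obtains s t where "0 \<le> s" "0 \<le> t" "s \<le> 1" "t \<le> 1" "x - p = s *\<^sub>R (q - p) + t *\<^sub>R (r - p)"
proof -
  obtain l1 l2 l3 where l: "0 \<le> l1" "0 \<le> l2" "0 \<le> l3" "l1 + l2 + l3 = 1"
    "x = l1 *\<^sub>R p + l2 *\<^sub>R q + l3 *\<^sub>R r"
    using assms unfolding convex_hull_3 by blast
  have pp: "p = (l1 + l2 + l3) *\<^sub>R p" using l(4) by simp
  have "x - p = l1 *\<^sub>R p + l2 *\<^sub>R q + l3 *\<^sub>R r - (l1 + l2 + l3) *\<^sub>R p"
    using l(5) pp by metis
  also have "\<dots> = l2 *\<^sub>R (q - p) + l3 *\<^sub>R (r - p)"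
    by (simp add: algebra_simps)
  finally have "x - p = l2 *\<^sub>R (q - p) + l3 *\<^sub>R (r - p)" .
  moreover have "l2 \<le> 1" "l3 \<le> 1" using l by linarith+
  ultimately show ?thesis using that l by blast
qed

lemma seg_tangent:
  assumes "x \<noteq> y"
  shows "seg_L2 (\<lambda>z. v \<bullet> unit_tangent x y) x y = \<bar>v \<bullet> (y - x)\<bar> / norm (y - x) * sqrt (norm (y - x))"
proof -
  have d: "dist x y = norm (y - x)" by (simp add: dist_norm norm_minus_commute)
  have "v \<bullet> unit_tangent x y = (v \<bullet> (y - x)) / norm (y - x)"
    unfolding unit_tangent_def inner_scaleR_right by simp
  moreover have "\<bar>(v \<bullet> (y - x)) / norm (y - x)\<bar> = \<bar>v \<bullet> (y - x)\<bar> / norm (y - x)"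
    by (simp add: abs_divide)
  ultimately show ?thesis unfolding seg_L2_const d by simp
qed

theorem lemmaC3:
  "\<exists>C>0. \<forall>(p::real^2) q r x y (v::real^2).
     \<not> collinear {p, q, r} \<and>
     tri_angle q p r \<le> tri_angle p q r \<and> tri_angle r p q \<le> tri_angle p q r \<and>
     x \<in> convex hull {p, q, r} \<and> y \<in> convex hull {p, q, r} \<and> x \<noteq> y \<longrightarrow>
     seg_L2 (\<lambda>z. v \<bullet> unit_tangent x y) x y
       \<le> C * (sin (tri_angle p q r)) powr (-1/2) *
           (seg_L2 (\<lambda>z. v \<bullet> unit_tangent p q) p q + seg_L2 (\<lambda>z. v \<bullet> unit_tangent p r) p r)"
proof (rule exI[of _ 1], simp, intro allI impI, elim conjE)
  fix p q r x y v :: "real^2"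
  assume nc: "\<not> collinear {p, q, r}" and hx: "x \<in> convex hull {p, q, r}"
    and hy: "y \<in> convex hull {p, q, r}" and xy: "x \<noteq> y"
  define u where "u = q - p"
  define w where "w = r - p"
  define d where "d = y - x"
  define a where "a = norm u"
  define b where "b = norm w"
  define L where "L = norm d"
  define D where "D = \<bar>det2 u w\<bar>"
  have Dpos: "D > 0" using det2_zero_collinear nc unfolding D_def u_def w_def by fastforce
  have u0: "u \<noteq> 0" using Dpos by (auto simp: D_def det2_def)
  have w0: "w \<noteq> 0" using Dpos by (auto simp: D_def det2_def)
  have apos: "a > 0" using u0 a_def by simp
  have bpos: "b > 0" using w0 b_def by simp
  have Lpos: "L > 0" using xy L_def d_def by simp
  obtain s1 t1 where st1: "0 \<le> s1" "0 \<le> t1" "s1 \<le> 1" "t1 \<le> 1" "x - p = s1 *\<^sub>R u + t1 *\<^sub>R w"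
    using hull_coords[OF hx, folded u_def w_def] by blast
  obtain s2 t2 where st2: "0 \<le> s2" "0 \<le> t2" "s2 \<le> 1" "t2 \<le> 1" "y - p = s2 *\<^sub>R u + t2 *\<^sub>R w"
    using hull_coords[OF hy, folded u_def w_def] by blast
  define al where "al = s2 - s1"
  define be where "be = t2 - t1"
  have dd: "d = al *\<^sub>R u + be *\<^sub>R w"
  proof -
    have "d = (y - p) - (x - p)" using d_def by simp
    also have "\<dots> = al *\<^sub>R u + be *\<^sub>R w" using st1(5) st2(5) by (simp add: al_def be_def algebra_simps)
    finally show ?thesis .
  qed
  have al1: "\<bar>al\<bar> \<le> 1" using st1 st2 al_def by linarith
  have be1: "\<bar>be\<bar> \<le> 1" using st1 st2 be_def by linarith
  have alD: "\<bar>al\<bar> * D \<le> L * b"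
  proof -
    have "\<bar>det2 d w\<bar> \<le> L * b" unfolding L_def b_def by (rule det2_bound)
    thus ?thesis using det2_lin1[of al u be w] dd by (simp add: D_def abs_mult)
  qed
  have beD: "\<bar>be\<bar> * D \<le> a * L"
  proof -
    have "\<bar>det2 u d\<bar> \<le> a * L" unfolding a_def L_def by (rule det2_bound)
    thus ?thesis using det2_lin2[of u al be w] dd by (simp add: D_def abs_mult)
  qed
  have vd: "\<bar>v \<bullet> d\<bar> \<le> \<bar>al\<bar> * \<bar>v \<bullet> u\<bar> + \<bar>be\<bar> * \<bar>v \<bullet> w\<bar>"
  proof -
    have "\<bar>v \<bullet> d\<bar> = \<bar>al * (v \<bullet> u) + be * (v \<bullet> w)\<bar>" by (simp add: dd inner_add_right)
    also have "\<dots> \<le> \<bar>al * (v \<bullet> u)\<bar> + \<bar>be * (v \<bullet> w)\<bar>" by (rule abs_triangle_ineq)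
    finally show ?thesis by (simp add: abs_mult)
  qed
  have Dab: "D \<le> a * b" unfolding D_def a_def b_def by (rule det2_bound)
  have sinv: "sin (tri_angle p q r) = D / (a * b)"
  proof -
    have ta: "tri_angle p q r = arccos ((u \<bullet> w) / (a * b))"
      by (simp add: tri_angle_def vec_angle_def u_def w_def a_def b_def)
    have cs: "\<bar>u \<bullet> w\<bar> \<le> a * b" unfolding a_def b_def by (rule Cauchy_Schwarz_ineq2)
    have abp: "a * b > 0" using apos bpos by simp
    have "\<bar>u \<bullet> w\<bar> / (a * b) \<le> 1" using cs abp by (simp only: divide_le_eq_1_pos)
    hence "\<bar>(u \<bullet> w) / (a * b)\<bar> \<le> 1" using abp by (simp only: abs_divide abs_of_pos)
    hence bnd: "- 1 \<le> (u \<bullet> w) / (a * b) \<and> (u \<bullet> w) / (a * b) \<le> 1" unfolding abs_le_iff by linarith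
    have "sin (tri_angle p q r) = sqrt (1 - ((u \<bullet> w) / (a * b))\<^sup>2)"
      unfolding ta using bnd by (intro sin_arccos) simp_all
    also have "1 - ((u \<bullet> w) / (a * b))\<^sup>2 = (D / (a * b))\<^sup>2"
    proof -
      have "D\<^sup>2 = a\<^sup>2 * b\<^sup>2 - (u \<bullet> w)\<^sup>2" using lagrange2[of u w] D_def a_def b_def by simp
      thus ?thesis using apos bpos by (simp add: field_simps power_mult_distrib)
    qed
    also have "sqrt ((D / (a * b))\<^sup>2) = D / (a * b)" using Dpos apos bpos by simp
    finally show ?thesis .
  qed
  have pw: "(sin (tri_angle p q r)) powr (-1/2) = sqrt (a * b / D)"
  proof -
    have e: "(-1/2::real) = - (1/2)" by simp
    have dab: "D / (a * b) \<ge> 0" using Dpos apos bpos by simp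
    have "(sin (tri_angle p q r)) powr (-1/2) = inverse ((sin (tri_angle p q r)) powr (1/2))"
      unfolding e by (rule powr_minus)
    also have "\<dots> = inverse (sqrt (D / (a * b)))" unfolding sinv using dab by (subst powr_half_sqrt) auto
    also have "\<dots> = sqrt (a * b / D)" by (simp add: real_sqrt_divide inverse_eq_divide)
    finally show ?thesis .
  qed
  have lhs: "seg_L2 (\<lambda>z. v \<bullet> unit_tangent x y) x y = \<bar>v \<bullet> d\<bar> / L * sqrt L"
    using seg_tangent[OF xy] unfolding L_def d_def .
  have r1: "seg_L2 (\<lambda>z. v \<bullet> unit_tangent p q) p q = \<bar>v \<bullet> u\<bar> / a * sqrt a"
    using seg_tangent[of p q v] u0 unfolding a_def u_def by simp
  have r2: "seg_L2 (\<lambda>z. v \<bullet> unit_tangent p r) p r = \<bar>v \<bullet> w\<bar> / b * sqrt b"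
    using seg_tangent[of p r v] w0 unfolding b_def w_def by simp
  have fin: "seg_L2 (\<lambda>z. v \<bullet> unit_tangent x y) x y
       \<le> (sin (tri_angle p q r)) powr (-1/2) *
           (seg_L2 (\<lambda>z. v \<bullet> unit_tangent p q) p q + seg_L2 (\<lambda>z. v \<bullet> unit_tangent p r) p r)"
    unfolding lhs r1 r2 pw
    by (rule key_real[OF Lpos apos bpos Dpos al1 be1 alD beD vd]) auto
  then show "seg_L2 (\<lambda>z. v \<bullet> unit_tangent x y) x y
       \<le> (sin (tri_angle p q r)) powr - (1 / 2) *
           (seg_L2 (\<lambda>z. v \<bullet> unit_tangent p q) p q + seg_L2 (\<lambda>z. v \<bullet> unit_tangent p r) p r)"
    by simp
qed

end
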